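(* Let $(S,\Delta,\mathbb{P})$ be a probability space, $(U,d)$ a separable metric space, $\mathfrak{X}$ the set of $U$-valued random variables on $S$, $\mathcal{I}$ an ideal on $\mathbb{N}$, $r\geq 0$, and $\{X_n\}_{n\in\mathbb{N}}$ a sequence in $\mathfrak{X}$. Then the set $\mathcal{I}^{\mathbb{P}}\text{-}LIM^rX_i$ is closed in $(\mathfrak{X}^0,\rho)$.
   Context: The Ky Fan metric is $\rho(X,Y)=\inf\{\varepsilon>0:\mathbb{P}(d(X,Y)>\varepsilon)\leq\varepsilon\}$; $\mathfrak{X}^0$ is the set of equivalence classes of $\mathfrak{X}$ under almost sure equality, on which $\rho$ is a metric. An ideal on $\mathbb{N}$ is a family $\mathcal{I}\subseteq\mathcal{P}(\mathbb{N})$ with $\varnothing\in\mathcal{I}$, closed under finite unions and under subsets. A sequence $\{X_n\}$ in $\mathfrak{X}$ is rough $\mathcal{I}$-convergent in probability to $X_*\in\mathfrak{X}$ with degree of roughness $r$ if $\{n\in\mathbb{N}:\mathbb{P}(d(X_n,X_* )>r+\varepsilon)>\delta\}\in\mathcal{I}$ for every $\varepsilon,\delta>0$; $\mathcal{I}^{\mathbb{P}}\text{-}LIM^rX_i$ denotes the set of all such $X_*$. *)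

theory Defs
  imports "HOL-Probability.Probability"
begin

definition ideal_on_nat :: "nat set set \<Rightarrow> bool" where
  "ideal_on_nat I \<longleftrightarrow> {} \<in> I \<and> (\<forall>A\<in>I. \<forall>B\<in>I. A \<union> B \<in> I) \<and> (\<forall>A\<in>I. \<forall>B. B \<subseteq> A \<longrightarrow> B \<in> I)"

definition ky_fan :: "'a measure \<Rightarrow> ('a \<Rightarrow> 'b::metric_space) \<Rightarrow> ('a \<Rightarrow> 'b) \<Rightarrow> real" where
  "ky_fan M X Y = Inf {\<epsilon>. \<epsilon> > 0 \<and> measure M {s \<in> space M. dist (X s) (Y s) > \<epsilon>} \<le> \<epsilon>}"

definition rough_I_LIM_prob ::
  "'a measure \<Rightarrow> nat set set \<Rightarrow> real \<Rightarrow> (nat \<Rightarrow> 'a \<Rightarrow> 'b::metric_space) \<Rightarrow> ('a \<Rightarrow> 'b) set" where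
  "rough_I_LIM_prob M I r X =
     {Z \<in> borel_measurable M. \<forall>\<epsilon>>0. \<forall>\<delta>>0.
        {n. measure M {s \<in> space M. dist (X n s) (Z s) > r + \<epsilon>} > \<delta>} \<in> I}"

end

theory Submission
  imports Defs
begin

theorem theorem2p2:
  fixes M :: "'a measure" and I :: "nat set set" and r :: real
    and X :: "nat \<Rightarrow> 'a \<Rightarrow> 'b::{metric_space, second_countable_topology}"
    and Y :: "'a \<Rightarrow> 'b"
  assumes "prob_space M"
    and "ideal_on_nat I"
    and "r \<ge> 0"
    and "\<And>n. X n \<in> borel_measurable M"
    and "Y \<in> borel_measurable M"
    and "\<And>\<epsilon>. \<epsilon> > 0 \<Longrightarrow> \<exists>Z \<in> rough_I_LIM_prob M I r X. ky_fan M Z Y < \<epsilon>"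
  shows "Y \<in> rough_I_LIM_prob M I r X"
proof -
  interpret P: prob_space M by fact
  have "\<forall>\<epsilon>>0. \<forall>\<delta>>0. {n. measure M {s \<in> space M. dist (X n s) (Y s) > r + \<epsilon>} > \<delta>} \<in> I"
  proof (intro allI impI)
    fix \<epsilon> \<delta> :: real assume e: "\<epsilon> > 0" and d: "\<delta> > 0"
    define \<eta> where "\<eta> = min (\<epsilon>/2) (\<delta>/2)"
    have "\<eta> > 0" using e d by (simp add: \<eta>_def)
    then obtain Z where Z: "Z \<in> rough_I_LIM_prob M I r X" and kf: "ky_fan M Z Y < \<eta>"
      using assms(6) by blast
    have Zm: "Z \<in> borel_measurable M" using Z by (simp add: rough_I_LIM_prob_def)
    have ZI: "{n. measure M {s \<in> space M. dist (X n s) (Z s) > r + \<epsilon>/2} > \<delta>/2} \<in> I"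
    proof -
      have "\<forall>\<epsilon>>0. \<forall>\<delta>>0. {n. measure M {s \<in> space M. dist (X n s) (Z s) > r + \<epsilon>} > \<delta>} \<in> I"
        using Z by (simp add: rough_I_LIM_prob_def)
      moreover have "\<epsilon>/2 > 0" "\<delta>/2 > 0" using e d by auto
      ultimately show ?thesis by blast
    qed
    let ?S = "{e. e > 0 \<and> measure M {s \<in> space M. dist (Z s) (Y s) > e} \<le> e}"
    have ne: "?S \<noteq> {}"
    proof -
      have "measure M {s \<in> space M. dist (Z s) (Y s) > 2} \<le> 2"
        using P.prob_le_1 by (smt (verit))
      then have "(2::real) \<in> ?S" by simp
      then show ?thesis by blast
    qed
    have bdd: "bdd_below ?S" by (intro bdd_belowI[of _ 0]) auto
    obtain e' where e'S: "e' \<in> ?S" and e'l: "e' < \<eta>"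
      using cInf_lessD[OF ne] kf unfolding ky_fan_def by blast
    have dm: "\<And>f g :: 'a \<Rightarrow> 'b. f \<in> borel_measurable M \<Longrightarrow> g \<in> borel_measurable M \<Longrightarrow>
       (\<lambda>s. dist (f s) (g s)) \<in> borel_measurable M"
      by (rule borel_measurable_dist)
    have "{n. measure M {s \<in> space M. dist (X n s) (Y s) > r + \<epsilon>} > \<delta>}
       \<subseteq> {n. measure M {s \<in> space M. dist (X n s) (Z s) > r + \<epsilon>/2} > \<delta>/2}"
    proof safe
      fix n assume big: "measure M {s \<in> space M. dist (X n s) (Y s) > r + \<epsilon>} > \<delta>"
      let ?A = "{s \<in> space M. dist (X n s) (Z s) > r + \<epsilon>/2}"
      let ?B = "{s \<in> space M. dist (Z s) (Y s) > e'}"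
      have Am: "?A \<in> sets M" using dm[OF assms(4)[of n] Zm] by measurable
      have Bm: "?B \<in> sets M" using dm[OF Zm assms(5)] by measurable
      have sub: "{s \<in> space M. dist (X n s) (Y s) > r + \<epsilon>} \<subseteq> ?A \<union> ?B"
      proof
        fix s assume s: "s \<in> {s \<in> space M. dist (X n s) (Y s) > r + \<epsilon>}"
        have "dist (X n s) (Y s) \<le> dist (X n s) (Z s) + dist (Z s) (Y s)"
          by (rule dist_triangle)
        moreover have "e' < \<epsilon>/2" using e'l by (simp add: \<eta>_def)
        ultimately show "s \<in> ?A \<union> ?B" using s by auto
      qed
      have "measure M {s \<in> space M. dist (X n s) (Y s) > r + \<epsilon>} \<le> measure M (?A \<union> ?B)"
        using sub Am Bm by (intro P.finite_measure_mono) auto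
      also have "\<dots> \<le> measure M ?A + measure M ?B"
        using Am Bm by (rule measure_subadditive) auto
      also have "measure M ?B \<le> e'" using e'S by simp
      finally have "measure M {s \<in> space M. dist (X n s) (Y s) > r + \<epsilon>} \<le> measure M ?A + e'"
        by simp
      moreover have "e' < \<delta>/2" using e'l by (simp add: \<eta>_def)
      ultimately show "measure M ?A > \<delta>/2" using big by linarith
    qed
    then show "{n. measure M {s \<in> space M. dist (X n s) (Y s) > r + \<epsilon>} > \<delta>} \<in> I"
      using ZI assms(2) unfolding ideal_on_nat_def by blast
  qed
  then show ?thesis using assms(5) by (simp add: rough_I_LIM_prob_def)
qed

end
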